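(* Let $\mathcal{M}=\langle \mathcal{S},\mathcal{A},\mathcal{P},\mathcal{R},\gamma\rangle$ be a deterministic finite MDP with next-state function $\mathscr{N}$, and let $d_{\sim}$ be the unique function $\mathcal{S}\times\mathcal{S}\to\mathbb{R}$ satisfying $d_{\sim}(s,t)=\max_{a\in\mathcal{A}}\left(|\mathcal{R}(s,a)-\mathcal{R}(t,a)|+\gamma\,d_{\sim}(\mathscr{N}(s,a),\mathscr{N}(t,a))\right)$ for all $s,t$. Let $\mathcal{D}$ be a probability distribution on the set $\mathcal{T}=\mathcal{S}\times\mathcal{S}\times\mathcal{A}$ of transition pairs $\tau_{s,t,a}$ (the pair of transitions $\langle s,a,\mathcal{R}(s,a),\mathscr{N}(s,a)\rangle$, $\langle t,a,\mathcal{R}(t,a),\mathscr{N}(t,a)\rangle$) with $\mathcal{D}(\tau)>0$ for all $\tau\in\mathcal{T}$, and let $\tau_{s_1,t_1,a_1},\tau_{s_2,t_2,a_2},\dots$ be independent samples from $\mathcal{D}$. Let $d_0\equiv 0$ and for $n\ge1$ define $d_n(s,t)=d_{n-1}(s,t)$ for all $(s,t)\neq(s_n,t_n)$ and $$d_n(s_n,t_n)=\max\left(d_{n-1}(s_n,t_n),\ |\mathcal{R}(s_n,a_n)-\mathcal{R}(t_n,a_n)|+\gamma\,d_{n-1}(\mathscr{N}(s_n,a_n),\mathscr{N}(t_n,a_n))\right).$$ Then $\lim_{n\to\infty}d_n=d_{\sim}$ almost surely.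
   Context: A finite MDP has finite state set $\mathcal{S}$, finite action set $\mathcal{A}$, transition kernel $\mathcal{P}$, reward $\mathcal{R}:\mathcal{S}\times\mathcal{A}\to\mathbb{R}$ bounded by $R_{max}$, and discount $\gamma\in[0,1)$. It is deterministic if for every $s,a$ there is a unique $\mathscr{N}(s,a)\in\mathcal{S}$ with $\mathcal{P}(s,a)(\mathscr{N}(s,a))=1$. In this deterministic setting $d_\sim$ coincides with the bisimulation metric of Ferns et al., the unique fixed point of $d\mapsto\max_a(|\mathcal{R}(s,a)-\mathcal{R}(t,a)|+\gamma\mathcal{W}_1(d)(\mathcal{P}(s,a),\mathcal{P}(t,a)))$. *)

theory Defs
  imports "HOL-Probability.Probability"
begin

text \<open>The argument x is the sample
  sequence (0-indexed: x n is the (n+1)-th sample tau_{s,t,a}); d_0 = 0.\<close>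
fun sampled_bisim :: "('s \<Rightarrow> 'a \<Rightarrow> real) \<Rightarrow> ('s \<Rightarrow> 'a \<Rightarrow> 's) \<Rightarrow> real \<Rightarrow>
    (nat \<Rightarrow> 's \<times> 's \<times> 'a) \<Rightarrow> nat \<Rightarrow> 's \<Rightarrow> 's \<Rightarrow> real" where
  "sampled_bisim R N g x 0 = (\<lambda>s t. 0)"
| "sampled_bisim R N g x (Suc n) =
     (let d = sampled_bisim R N g x n;
          (sn, tn, an) = x n
      in (\<lambda>s t. if (s, t) = (sn, tn)
                then max (d sn tn) (\<bar>R sn an - R tn an\<bar> + g * d (N sn an) (N tn an))
                else d s t))"

end

theory Submission
  imports Defs "HOL-Probability.Probability"
begin

lemma sb_step:
  assumes "x n = (sn, tn, an)"
  shows "sampled_bisim R N g x (Suc n) s t =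
     (if (s, t) = (sn, tn)
      then max (sampled_bisim R N g x n sn tn)
          (\<bar>R sn an - R tn an\<bar> + g * sampled_bisim R N g x n (N sn an) (N tn an))
      else sampled_bisim R N g x n s t)"
  using assms by (simp add: Let_def)

lemma sb_mono1: "sampled_bisim R N g x n s t \<le> sampled_bisim R N g x (Suc n) s t"
proof -
  obtain sn tn an where e: "x n = (sn, tn, an)" by (metis prod_cases3)
  show ?thesis unfolding sb_step[where x=x and n=n, OF e] by auto
qed

lemma sb_incseq: "incseq (\<lambda>n. sampled_bisim R N g x n s t)"
  by (rule incseq_SucI) (rule sb_mono1)

lemma sb_upper:
  assumes g0: "0 \<le> g"
    and dge: "\<And>s t a. \<bar>R s a - R t a\<bar> + g * dsim (N s a) (N t a) \<le> dsim s t"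
    and d0: "\<And>s t. 0 \<le> dsim s t"
  shows "sampled_bisim R N g x n s t \<le> dsim s t"
proof (induction n arbitrary: s t)
  case 0
  then show ?case using d0 by simp
next
  case (Suc n)
  obtain sn tn an where e: "x n = (sn, tn, an)" by (metis prod_cases3)
  have "\<bar>R sn an - R tn an\<bar> + g * sampled_bisim R N g x n (N sn an) (N tn an)
        \<le> \<bar>R sn an - R tn an\<bar> + g * dsim (N sn an) (N tn an)"
    using Suc.IH g0 by (simp add: mult_left_mono)
  also have "\<dots> \<le> dsim sn tn" by (rule dge)
  finally show ?case unfolding sb_step[where x=x and n=n, OF e] using Suc.IH by auto
qed

lemma deterministic_part:
  fixes R :: "'s::finite \<Rightarrow> 'a::finite \<Rightarrow> real"
  assumes g0: "0 \<le> g" and g1: "g < 1"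
    and ds: "\<forall>s t. dsim s t = Max (range (\<lambda>a. \<bar>R s a - R t a\<bar> + g * dsim (N s a) (N t a)))"
    and inf: "\<And>\<tau> n. \<exists>k. x (k + n) = \<tau>"
  shows "\<forall>s t. (\<lambda>n. sampled_bisim R N g x n s t) \<longlonglongrightarrow> dsim s t"
proof -
  define d where "d = sampled_bisim R N g x"
  have dge: "\<And>s t a. \<bar>R s a - R t a\<bar> + g * dsim (N s a) (N t a) \<le> dsim s t"
  proof -
    fix s t a
    show "\<bar>R s a - R t a\<bar> + g * dsim (N s a) (N t a) \<le> dsim s t"
    proof -
      have "\<bar>R s a - R t a\<bar> + g * dsim (N s a) (N t a)
         \<le> Max (range (\<lambda>a. \<bar>R s a - R t a\<bar> + g * dsim (N s a) (N t a)))"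
        by (rule Max_ge) auto
      then show ?thesis by (subst ds[rule_format, of s t])
    qed
  qed
  have datt: "\<And>s t. \<exists>a. dsim s t = \<bar>R s a - R t a\<bar> + g * dsim (N s a) (N t a)"
  proof -
    fix s t
    have "Max (range (\<lambda>a. \<bar>R s a - R t a\<bar> + g * dsim (N s a) (N t a)))
          \<in> range (\<lambda>a. \<bar>R s a - R t a\<bar> + g * dsim (N s a) (N t a))"
      by (rule Max_in) auto
    then show "\<exists>a. dsim s t = \<bar>R s a - R t a\<bar> + g * dsim (N s a) (N t a)"
      by (subst ds[rule_format, of s t]) blast
  qed
  define m0 where "m0 = Min (range (\<lambda>(s,t). dsim s t))"
  have d0: "\<And>s t. 0 \<le> dsim s t"
  proof -
    fix s t
    have le: "m0 \<le> dsim s t" unfolding m0_def by (rule Min_le) (auto intro: rev_image_eqI[of "(s,t)"])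
    obtain s0 t0 where m: "m0 = dsim s0 t0"
    proof -
      have "m0 \<in> range (\<lambda>(s,t). dsim s t)" unfolding m0_def by (rule Min_in) auto
      then show ?thesis using that by auto
    qed
    obtain a :: 'a where True by simp
    have "dsim (N s0 a) (N t0 a) \<ge> m0" unfolding m0_def
      by (rule Min_le) (auto intro: rev_image_eqI[of "(N s0 a, N t0 a)"])
    then have "g * dsim (N s0 a) (N t0 a) \<ge> g * m0" using g0 by (simp add: mult_left_mono)
    then have "m0 \<ge> g * m0" using dge[of s0 a t0] m by linarith
    then have "(1 - g) * m0 \<ge> 0" by (simp add: algebra_simps)
    then have "m0 \<ge> 0" using g1 by (simp add: zero_le_mult_iff)
    then show "0 \<le> dsim s t" using le by linarith
  qed
  have up: "\<And>n s t. d n s t \<le> dsim s t"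
    unfolding d_def by (rule sb_upper[where R=R and N=N and g=g and dsim=dsim, OF g0 dge d0])
  define L where "L s t = (SUP n. d n s t)" for s t
  have lim: "\<And>s t. (\<lambda>n. d n s t) \<longlonglongrightarrow> L s t"
    unfolding L_def d_def
    by (rule LIMSEQ_incseq_SUP[OF _ sb_incseq]) (auto intro: bdd_aboveI2 sb_upper[where R=R and N=N and g=g and dsim=dsim, OF g0 dge d0])
  have Lup: "\<And>s t. L s t \<le> dsim s t"
    using lim up by (meson LIMSEQ_le_const2)
  have dL: "\<And>n s t. d n s t \<le> L s t"
    unfolding d_def by (rule incseq_le[OF sb_incseq lim[unfolded d_def]])
  have Lge: "\<And>s t a. \<bar>R s a - R t a\<bar> + g * L (N s a) (N t a) \<le> L s t"
  proof -
    fix s t a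
    have "\<forall>n. \<bar>R s a - R t a\<bar> + g * d n (N s a) (N t a) \<le> L s t"
    proof
      fix n
      obtain k where k: "x (k + n) = (s, t, a)" using inf by blast
      have "d n (N s a) (N t a) \<le> d (k + n) (N s a) (N t a)"
        unfolding d_def by (rule incseqD[OF sb_incseq]) simp
      then have "\<bar>R s a - R t a\<bar> + g * d n (N s a) (N t a)
          \<le> \<bar>R s a - R t a\<bar> + g * d (k + n) (N s a) (N t a)"
        using g0 by (simp add: mult_left_mono)
      also have "\<dots> \<le> d (Suc (k + n)) s t"
        unfolding d_def sb_step[where x=x and n="k+n", OF k] by simp
      also have "\<dots> \<le> L s t" by (rule dL)
      finally show "\<bar>R s a - R t a\<bar> + g * d n (N s a) (N t a) \<le> L s t" .
    qed
    moreover have "(\<lambda>n. \<bar>R s a - R t a\<bar> + g * d n (N s a) (N t a))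
       \<longlonglongrightarrow> \<bar>R s a - R t a\<bar> + g * L (N s a) (N t a)"
      by (intro tendsto_intros lim)
    ultimately show "\<bar>R s a - R t a\<bar> + g * L (N s a) (N t a) \<le> L s t"
      by (meson LIMSEQ_le_const2)
  qed
  define M where "M = Max (range (\<lambda>(s,t). dsim s t - L s t))"
  obtain s0 t0 where m: "M = dsim s0 t0 - L s0 t0"
  proof -
    have "M \<in> range (\<lambda>(s,t). dsim s t - L s t)" unfolding M_def by (rule Max_in) auto
    then show ?thesis using that by auto
  qed
  obtain a where a: "dsim s0 t0 = \<bar>R s0 a - R t0 a\<bar> + g * dsim (N s0 a) (N t0 a)"
    using datt by blast
  have "dsim (N s0 a) (N t0 a) - L (N s0 a) (N t0 a) \<le> M" unfolding M_def
    by (rule Max_ge) (auto intro: rev_image_eqI[of "(N s0 a, N t0 a)"])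
  then have "g * (dsim (N s0 a) (N t0 a) - L (N s0 a) (N t0 a)) \<le> g * M"
    using g0 by (simp add: mult_left_mono)
  moreover have "g * (dsim (N s0 a) (N t0 a) - L (N s0 a) (N t0 a)) =
      g * dsim (N s0 a) (N t0 a) - g * L (N s0 a) (N t0 a)" by (simp add: right_diff_distrib)
  ultimately have "M \<le> g * M" using m a Lge[of s0 a t0] by linarith
  then have "(1 - g) * M \<le> 0" by (simp add: algebra_simps)
  then have M0: "M \<le> 0" using g1 by (simp add: mult_le_0_iff)
  have Leq: "\<And>s t. L s t = dsim s t"
  proof -
    fix s t
    have "dsim s t - L s t \<le> M" unfolding M_def
      by (rule Max_ge) (auto intro: rev_image_eqI[of "(s, t)"])
    then show "L s t = dsim s t" using M0 Lup[of s t] by linarith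
  qed
  show ?thesis
  proof (intro allI)
    fix s t
    show "(\<lambda>n. sampled_bisim R N g x n s t) \<longlonglongrightarrow> dsim s t"
      using lim[of s t] Leq[of s t] by (simp add: d_def)
  qed
qed

lemma never_null:
  fixes D :: "'b pmf"
  assumes p: "pmf D \<tau> > 0"
  shows "AE \<omega> in stream_space (measure_pmf D). \<not> (\<forall>k. \<omega> !! k \<noteq> \<tau>)"
proof -
  interpret S: prob_space "stream_space (measure_pmf D)"
    by (rule prob_space.prob_space_stream_space[OF prob_space_measure_pmf])
  define E where "E = {\<omega> \<in> space (stream_space (measure_pmf D)). \<forall>k. \<omega> !! k \<noteq> \<tau>}"
  have Em[measurable]: "E \<in> sets (stream_space (measure_pmf D))"
    unfolding E_def by measurable
  have "emeasure (stream_space (measure_pmf D)) E =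
     (\<integral>\<^sup>+t. emeasure (stream_space (measure_pmf D)) {x\<in>space (stream_space (measure_pmf D)). t ## x \<in> E} \<partial>measure_pmf D)"
    by (rule prob_space.emeasure_stream_space[OF prob_space_measure_pmf Em])
  also have "\<dots> = (\<integral>\<^sup>+t. emeasure (stream_space (measure_pmf D)) E * indicator (- {\<tau>}) t \<partial>measure_pmf D)"
  proof (rule nn_integral_cong)
    fix t
    have "{x\<in>space (stream_space (measure_pmf D)). t ## x \<in> E} = (if t = \<tau> then {} else E)"
      unfolding E_def by (auto simp: space_stream_space Stream_snth split: nat.splits)
    then show "emeasure (stream_space (measure_pmf D)) {x\<in>space (stream_space (measure_pmf D)). t ## x \<in> E} =
        emeasure (stream_space (measure_pmf D)) E * indicator (- {\<tau>}) t"
      by auto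
  qed
  also have "\<dots> = emeasure (stream_space (measure_pmf D)) E * emeasure (measure_pmf D) (- {\<tau>})"
    by (subst nn_integral_cmult_indicator) auto
  finally have eq: "emeasure (stream_space (measure_pmf D)) E = emeasure (stream_space (measure_pmf D)) E * emeasure (measure_pmf D) (- {\<tau>})" .
  have "emeasure (measure_pmf D) (- {\<tau>}) = ennreal (1 - pmf D \<tau>)"
  proof -
    have "measure (measure_pmf D) (UNIV - {\<tau>}) = 1 - measure (measure_pmf D) {\<tau>}"
      using measure_pmf.prob_compl[of "{\<tau>}" D] by simp
    then show ?thesis
      by (simp add: measure_pmf.emeasure_eq_measure measure_pmf_single Compl_eq_Diff_UNIV)
  qed
  then have e2: "ennreal (S.prob E) = ennreal (S.prob E) * ennreal (1 - pmf D \<tau>)"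
    using eq by (simp add: S.emeasure_eq_measure)
  have p1: "1 - pmf D \<tau> \<ge> 0" using pmf_le_1[of D \<tau>] by simp
  have "ennreal (S.prob E) * ennreal (1 - pmf D \<tau>) = ennreal (S.prob E * (1 - pmf D \<tau>))"
    by (rule ennreal_mult[symmetric]) (simp_all add: pmf_le_1)
  with e2 have "ennreal (S.prob E) = ennreal (S.prob E * (1 - pmf D \<tau>))" by simp
  then have "S.prob E = S.prob E * (1 - pmf D \<tau>)"
    using p1 by (subst (asm) ennreal_inj) simp_all
  then have "S.prob E * pmf D \<tau> = 0" by (simp add: algebra_simps)
  then have "S.prob E = 0" using p by simp
  then have "emeasure (stream_space (measure_pmf D)) E = 0" by (simp add: S.emeasure_eq_measure)
  then show ?thesis
    by (intro AE_I[OF _ _ Em]) (auto simp: E_def)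
qed

lemma never_null_shift:
  fixes D :: "'b pmf"
  assumes p: "pmf D \<tau> > 0"
  shows "AE \<omega> in stream_space (measure_pmf D). \<exists>k. \<omega> !! (k + n) = \<tau>"
proof (induction n)
  case 0
  then show ?case using never_null[OF p] by (auto elim!: eventually_mono)
next
  case (Suc n)
  have m: "Measurable.pred (stream_space (measure_pmf D)) (\<lambda>\<omega>. \<exists>k. \<omega> !! (k + Suc n) = \<tau>)"
    by measurable
  show ?case
    apply (subst prob_space.AE_stream_space[OF prob_space_measure_pmf m])
    using Suc.IH by simp
qed

lemma all_infinitely:
  fixes D :: "('b::countable) pmf"
  assumes p: "\<forall>\<tau>. pmf D \<tau> > 0"
  shows "AE \<omega> in stream_space (measure_pmf D). \<forall>\<tau> n. \<exists>k. \<omega> !! (k + n) = \<tau>"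
  using p by (auto simp: AE_all_countable intro: never_null_shift)


theorem theorem4:
  fixes R :: "'s::finite \<Rightarrow> 'a::finite \<Rightarrow> real"
    and N :: "'s \<Rightarrow> 'a \<Rightarrow> 's"
    and g :: real
    and dsim :: "'s \<Rightarrow> 's \<Rightarrow> real"
    and D :: "('s \<times> 's \<times> 'a) pmf"
  assumes "0 \<le> g" and "g < 1"
    and "\<forall>s t. dsim s t = Max (range (\<lambda>a. \<bar>R s a - R t a\<bar> + g * dsim (N s a) (N t a)))"
    and "\<forall>\<tau>. pmf D \<tau> > 0"
  shows "AE \<omega> in stream_space (measure_pmf D).
           \<forall>s t. (\<lambda>n. sampled_bisim R N g (snth \<omega>) n s t) \<longlonglongrightarrow> dsim s t"
  using all_infinitely[OF assms(4)]
proof (rule eventually_mono)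
  fix \<omega> :: "('s \<times> 's \<times> 'a) stream"
  assume "\<forall>\<tau> n. \<exists>k. \<omega> !! (k + n) = \<tau>"
  then show "\<forall>s t. (\<lambda>n. sampled_bisim R N g (snth \<omega>) n s t) \<longlonglongrightarrow> dsim s t"
    by (intro deterministic_part[OF assms(1-3)]) blast
qed

end
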